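(* Let $\alpha,\beta,\gamma\in C^\infty(\mathbb R)$ and, for $\phi\in C^\infty(\mathbb R)$, let $Q_\phi=\sum_{n\ge0}\hbar^{2n}\frac{\alpha(u)^n\phi^{(n)}(u)}{n!}u_x^{2n+1}$. Then the flows $u_{\tau_\beta}=Q_\beta$ and $u_{\tau_\gamma}=Q_\gamma$ commute, i.e. $Q_\beta'[Q_\gamma]-Q_\gamma'[Q_\beta]=0$ as formal series in $\hbar$.
   Context: $u_k=\partial_x^ku$; total derivative $D=\sum_{r\ge0}u_{r+1}\partial/\partial u_r$ ($u_0=u$); Fréchet derivative $P'[V]=\sum_{r\ge0}\frac{\partial P}{\partial u_r}D^rV$, extended coefficientwise to formal series in the formal parameter $\hbar$. $\phi^{(n)}$ is the $n$-th derivative. *)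

theory Defs
  imports "HOL-Analysis.Analysis"
begin

text \<open>Jet space: a point is a sequence u with u r = u_r (u_0 = u).
  A formal series in hbar is its coefficient sequence nat \<Rightarrow> jet function.\<close>

type_synonym jetfun = "(nat \<Rightarrow> real) \<Rightarrow> real"

definition smooth_real :: "(real \<Rightarrow> real) \<Rightarrow> bool" where
  "smooth_real f \<longleftrightarrow> (\<forall>n x. (deriv ^^ n) f differentiable (at x))"

definition jet_partial :: "nat \<Rightarrow> jetfun \<Rightarrow> jetfun" where
  "jet_partial r P = (\<lambda>u. deriv (\<lambda>t. P (u(r := t))) (u r))"

text \<open>Total derivative D = sum_r u_{r+1} d/du_r, truncated at order N
  (exact for differential functions depending only on u_0..u_N).\<close>
definition jet_D :: "nat \<Rightarrow> jetfun \<Rightarrow> jetfun" where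
  "jet_D N P = (\<lambda>u. \<Sum>r\<le>N. u (Suc r) * jet_partial r P u)"

text \<open>Iterated total derivative D^r V for V of order at most N (D^r V has order N + r).\<close>
fun jet_Diter :: "nat \<Rightarrow> nat \<Rightarrow> jetfun \<Rightarrow> jetfun" where
  "jet_Diter N 0 V = V"
| "jet_Diter N (Suc r) V = jet_D (N + r) (jet_Diter N r V)"

definition frechet :: "nat \<Rightarrow> jetfun \<Rightarrow> jetfun \<Rightarrow> jetfun" where
  "frechet N P V = (\<lambda>u. \<Sum>r\<le>N. jet_partial r P u * jet_Diter N r V u)"

definition series_frechet :: "nat \<Rightarrow> (nat \<Rightarrow> jetfun) \<Rightarrow> (nat \<Rightarrow> jetfun) \<Rightarrow> nat \<Rightarrow> jetfun" where
  "series_frechet N P V m = (\<lambda>u. \<Sum>i\<le>m. frechet N (P i) (V (m - i)) u)"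

text \<open>Q_phi = sum_n hbar^(2n) alpha(u)^n phi^(n)(u) / n! u_x^(2n+1), as coefficient sequence.\<close>
definition Qser :: "(real \<Rightarrow> real) \<Rightarrow> (real \<Rightarrow> real) \<Rightarrow> nat \<Rightarrow> jetfun" where
  "Qser \<alpha> \<phi> k = (\<lambda>u. if even k then
       \<alpha> (u 0) ^ (k div 2) * (deriv ^^ (k div 2)) \<phi> (u 0) / fact (k div 2) * u 1 ^ (k + 1)
     else 0)"

end

theory Submission
  imports Defs
begin

lemma sum_two:
  fixes N :: nat
  assumes "1 \<le> N" "\<And>r. r \<ge> 2 \<Longrightarrow> g r = 0"
  shows "(\<Sum>r\<le>N. g r) = g 0 + (g 1 :: real)"
  using assms(1)
proof (induction N rule: dec_induct)
  case base then show ?case by simp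
next
  case (step n) then show ?case using assms(2)[of "Suc n"] by simp
qed

lemma jp0:
  assumes "\<And>x. c differentiable at x"
  shows "jet_partial 0 (\<lambda>u. c (u 0) * u 1 ^ e) u = deriv c (u 0) * u 1 ^ e"
proof -
  have "((\<lambda>t. c t * u 1 ^ e) has_real_derivative deriv c (u 0) * u 1 ^ e) (at (u 0))"
    using assms DERIV_deriv_iff_real_differentiable DERIV_cmult_right by blast
  then show ?thesis unfolding jet_partial_def by (simp add: DERIV_imp_deriv)
qed

lemma jp1:
  shows "jet_partial 1 (\<lambda>u. c (u 0) * u 1 ^ e) u = c (u 0) * (real e * u 1 ^ (e - 1))"
proof -
  have "((\<lambda>t. c (u 0) * t ^ e) has_real_derivative c (u 0) * (real e * u 1 ^ (e - 1))) (at (u 1))"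
    using DERIV_pow DERIV_cmult by fastforce
  then show ?thesis unfolding jet_partial_def by (simp add: DERIV_imp_deriv)
qed

lemma jp2:
  assumes "r \<ge> 2"
  shows "jet_partial r (\<lambda>u. c (u 0) * u 1 ^ e) u = 0"
  using assms unfolding jet_partial_def by simp

lemma frechet_eq:
  assumes "1 \<le> N" "\<And>x. c differentiable at x" "\<And>x. d differentiable at x"
  shows "frechet N (\<lambda>u. c (u 0) * u 1 ^ e) (\<lambda>u. d (u 0) * u 1 ^ f) u =
     deriv c (u 0) * u 1 ^ e * (d (u 0) * u 1 ^ f) + c (u 0) * (real e * u 1 ^ (e - 1)) *
       (u 1 * (deriv d (u 0) * u 1 ^ f) + u 2 * (d (u 0) * (real f * u 1 ^ (f - 1))))"
proof -
  have D: "jet_D N (\<lambda>u. d (u 0) * u 1 ^ f) u =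
      u 1 * (deriv d (u 0) * u 1 ^ f) + u 2 * (d (u 0) * (real f * u 1 ^ (f - 1)))"
    unfolding jet_D_def
    by (subst sum_two[OF assms(1)]) (simp_all only: jp0[OF assms(3)] jp1 jp2 mult_zero_right, simp add: numeral_2_eq_2)
  have D1: "jet_Diter N 1 V = jet_D N V" for V by simp
  show ?thesis unfolding frechet_def
    by (subst sum_two[OF assms(1)]) (simp_all only: jp0[OF assms(2)] jp1 jp2 mult_zero_left D1 D jet_Diter.simps(1))
qed

lemma pair_alg:
  fixes p q c c' d d' :: real
  shows "c' * p ^ Suc i * (d * p ^ Suc j) + c * (real (Suc i) * p ^ (Suc i - 1)) *
       (p * (d' * p ^ Suc j) + q * (d * (real (Suc j) * p ^ (Suc j - 1))))
   - (d' * p ^ Suc j * (c * p ^ Suc i) + d * (real (Suc j) * p ^ (Suc j - 1)) *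
       (p * (c' * p ^ Suc i) + q * (c * (real (Suc i) * p ^ (Suc i - 1)))))
   = p ^ (i + j + 2) * (real i * c * d' - real j * c' * d)"
  by (simp add: algebra_simps power_add)

lemma core:
  fixes a a' :: real and B G :: "nat \<Rightarrow> real"
  shows "(\<Sum>n\<le>M. real n * (a^n * B n / fact n) *
      ((real (M-n) * a^(M-n-1) * a' * G (M-n) + a^(M-n) * G (Suc (M-n))) / fact (M-n))
    - real (M-n) * ((real n * a^(n-1) * a' * B n + a^n * B (Suc n)) / fact n) *
      (a^(M-n) * G (M-n) / fact (M-n))) = 0"
proof -
  define X where "X n = real n * a^n * B n * a^(M-n) * G (Suc (M-n)) / (fact n * fact (M-n))" for n
  define Y where "Y n = real (M-n) * a^n * B (Suc n) * a^(M-n) * G (M-n) / (fact n * fact (M-n))" for n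
  have trm: "real n * (a^n * B n / fact n) *
      ((real (M-n) * a^(M-n-1) * a' * G (M-n) + a^(M-n) * G (Suc (M-n))) / fact (M-n))
    - real (M-n) * ((real n * a^(n-1) * a' * B n + a^n * B (Suc n)) / fact n) *
      (a^(M-n) * G (M-n) / fact (M-n)) = X n - Y n" if "n \<le> M" for n
  proof -
    have key: "real n * real (M-n) * (a^n * a^(M-n-1)) = real n * real (M-n) * (a^(n-1) * a^(M-n))"
    proof (cases "n = 0 \<or> M - n = 0")
      case True then show ?thesis by auto
    next
      case False
      then have "a^n * a^(M-n-1) = a^(M-1)" "a^(n-1) * a^(M-n) = a^(M-1)"
        using that by (simp_all flip: power_add)
      then show ?thesis by simp
    qed
    have "real n * (a^n * B n / fact n) *
      ((real (M-n) * a^(M-n-1) * a' * G (M-n) + a^(M-n) * G (Suc (M-n))) / fact (M-n))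
    - real (M-n) * ((real n * a^(n-1) * a' * B n + a^n * B (Suc n)) / fact n) *
      (a^(M-n) * G (M-n) / fact (M-n)) =
      (a' * B n * G (M-n) * (real n * real (M-n) * (a^n * a^(M-n-1)) - real n * real (M-n) * (a^(n-1) * a^(M-n)))
       + real n * a^n * B n * a^(M-n) * G (Suc (M-n)) - real (M-n) * a^n * B (Suc n) * a^(M-n) * G (M-n))
      / (fact n * fact (M-n))"
      by (simp add: field_simps)
    also have "\<dots> = X n - Y n" unfolding X_def Y_def key by (simp add: diff_divide_distrib)
    finally show ?thesis .
  qed
  have "(\<Sum>n\<le>M. X n) = (\<Sum>n\<le>M. Y n)"
  proof (cases M)
    case 0 then show ?thesis by (simp add: X_def Y_def)
  next
    case (Suc K)
    have "(\<Sum>n\<le>M. X n) = X 0 + (\<Sum>n\<le>K. X (Suc n))" unfolding Suc by (rule sum.atMost_Suc_shift)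
    also have "\<dots> = (\<Sum>n\<le>K. Y n)"
    proof -
      have "X 0 = 0" by (simp add: X_def)
      moreover have "X (Suc n) = Y n" if "n \<le> K" for n
      proof -
        have e1: "M - Suc n = K - n" "M - n = Suc (K - n)" using Suc that by auto
        have "X (Suc n) = B (Suc n) * G (Suc (K-n)) * (a^(Suc n) * a^(K-n)) / (fact n * fact (K-n))"
          unfolding X_def e1 fact_Suc of_nat_mult by simp
        moreover have "Y n = B (Suc n) * G (Suc (K-n)) * (a^n * a^(Suc (K-n))) / (fact n * fact (K-n))"
          unfolding Y_def e1 fact_Suc of_nat_mult by simp
        ultimately show ?thesis by (simp add: ac_simps)
      qed
      ultimately show ?thesis by simp
    qed
    also have "\<dots> = (\<Sum>n\<le>M. Y n)" using Suc by (simp add: Y_def)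
    finally show ?thesis .
  qed
  then have "(\<Sum>n\<le>M. X n - Y n) = 0" by (simp add: sum_subtractf)
  moreover have "(\<Sum>n\<le>M. X n - Y n) = (\<Sum>n\<le>M. real n * (a^n * B n / fact n) *
      ((real (M-n) * a^(M-n-1) * a' * G (M-n) + a^(M-n) * G (Suc (M-n))) / fact (M-n))
    - real (M-n) * ((real n * a^(n-1) * a' * B n + a^n * B (Suc n)) / fact n) *
      (a^(M-n) * G (M-n) / fact (M-n)))"
    by (rule sum.cong) (simp_all only: trm atMost_iff)
  ultimately show ?thesis by simp
qed

definition cf :: "(real \<Rightarrow> real) \<Rightarrow> (real \<Rightarrow> real) \<Rightarrow> nat \<Rightarrow> real \<Rightarrow> real" where
  "cf \<alpha> \<phi> k = (if even k then (\<lambda>x. \<alpha> x ^ (k div 2) * (deriv ^^ (k div 2)) \<phi> x / fact (k div 2)) else (\<lambda>x. 0))"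

lemma Qser_eq: "Qser \<alpha> \<phi> k = (\<lambda>u. cf \<alpha> \<phi> k (u 0) * u 1 ^ (k + 1))"
  by (auto simp: Qser_def cf_def fun_eq_iff)

lemma fn_deriv:
  assumes "smooth_real \<alpha>" "smooth_real \<phi>"
  shows "((\<lambda>x. \<alpha> x ^ n * (deriv ^^ n) \<phi> x / fact n) has_real_derivative
     (real n * \<alpha> x ^ (n - 1) * deriv \<alpha> x * (deriv ^^ n) \<phi> x + \<alpha> x ^ n * (deriv ^^ Suc n) \<phi> x) / fact n) (at x)"
proof -
  have a: "(\<alpha> has_real_derivative deriv \<alpha> x) (at x)"
    using assms(1) unfolding smooth_real_def
    by (metis DERIV_deriv_iff_real_differentiable funpow_0)
  have p: "((deriv ^^ n) \<phi> has_real_derivative (deriv ^^ Suc n) \<phi> x) (at x)"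
    using assms(2) unfolding smooth_real_def
    by (simp add: DERIV_deriv_iff_real_differentiable)
  show ?thesis
    by (auto intro!: derivative_eq_intros a p simp: field_simps)
qed

lemma cf_diff:
  assumes "smooth_real \<alpha>" "smooth_real \<phi>"
  shows "cf \<alpha> \<phi> k differentiable at x"
proof (cases "even k")
  case True
  then show ?thesis unfolding cf_def using fn_deriv[OF assms, of "k div 2" x]
    by (auto simp: real_differentiable_def)
next
  case False then show ?thesis unfolding cf_def by simp
qed

lemma cf_odd: "odd k \<Longrightarrow> cf \<alpha> \<phi> k x = 0" "odd k \<Longrightarrow> deriv (cf \<alpha> \<phi> k) x = 0"
  unfolding cf_def by simp_all

lemma cf_even:
  assumes "smooth_real \<alpha>" "smooth_real \<phi>"
  shows "cf \<alpha> \<phi> (2*n) x = \<alpha> x ^ n * (deriv ^^ n) \<phi> x / fact n"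
    "deriv (cf \<alpha> \<phi> (2*n)) x = (real n * \<alpha> x ^ (n - 1) * deriv \<alpha> x * (deriv ^^ n) \<phi> x + \<alpha> x ^ n * (deriv ^^ Suc n) \<phi> x) / fact n"
  using DERIV_imp_deriv[OF fn_deriv[OF assms, of n x]] unfolding cf_def by simp_all

lemma split_even_odd:
  fixes h :: "nat \<Rightarrow> real"
  shows "(\<Sum>i\<le>2*M. h i) = (\<Sum>n\<le>M. h (2*n)) + (\<Sum>n<M. h (2*n+1))"
proof (induction M)
  case 0 then show ?case by simp
next
  case (Suc M)
  have "{..2 * Suc M} = insert (Suc (Suc (2*M))) (insert (Suc (2*M)) {..2*M})" by auto
  then have "(\<Sum>i\<le>2*Suc M. h i) = h (Suc (Suc (2*M))) + h (Suc (2*M)) + (\<Sum>i\<le>2*M. h i)"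
    by simp
  then show ?case using Suc by simp
qed

lemma cf_core:
  assumes "smooth_real \<alpha>" "smooth_real \<beta>" "smooth_real \<gamma>"
  shows "(\<Sum>i\<le>m. real i * cf \<alpha> \<beta> i x * deriv (cf \<alpha> \<gamma> (m-i)) x
            - real (m-i) * deriv (cf \<alpha> \<beta> i) x * cf \<alpha> \<gamma> (m-i) x) = 0"
    (is "(\<Sum>i\<le>m. ?h i) = 0")
proof (cases "even m")
  case False
  have "?h i = 0" if "i \<le> m" for i
  proof (cases "even i")
    case True
    then have "odd (m - i)" using False that by auto
    then show ?thesis by (simp add: cf_odd)
  next
    case False then show ?thesis by (simp add: cf_odd)
  qed
  then show ?thesis by simp
next
  case True
  then obtain M where m: "m = 2*M" by auto
  have odd0: "(\<Sum>n<M. ?h (2*n+1)) = 0" by (simp add: cf_odd)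
  have ev: "?h (2*n) = 2 * (real n * (\<alpha> x^n * (deriv^^n) \<beta> x / fact n) *
      ((real (M-n) * \<alpha> x^(M-n-1) * deriv \<alpha> x * (deriv^^(M-n)) \<gamma> x + \<alpha> x^(M-n) * (deriv^^(Suc (M-n))) \<gamma> x) / fact (M-n))
    - real (M-n) * ((real n * \<alpha> x^(n-1) * deriv \<alpha> x * (deriv^^n) \<beta> x + \<alpha> x^n * (deriv^^(Suc n)) \<beta> x) / fact n) *
      (\<alpha> x^(M-n) * (deriv^^(M-n)) \<gamma> x / fact (M-n)))" if "n \<le> M" for n
  proof -
    have e: "m - 2*n = 2*(M-n)" "real (2*(M-n)) = 2 * real (M-n)" "real (2*n) = 2 * real n" using m that by auto
    show ?thesis unfolding e cf_even[OF assms(1,2)] cf_even[OF assms(1,3)] by (simp add: algebra_simps)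
  qed
  have "(\<Sum>n\<le>M. ?h (2*n)) = 2 * (\<Sum>n\<le>M. real n * (\<alpha> x^n * (deriv^^n) \<beta> x / fact n) *
      ((real (M-n) * \<alpha> x^(M-n-1) * deriv \<alpha> x * (deriv^^(M-n)) \<gamma> x + \<alpha> x^(M-n) * (deriv^^(Suc (M-n))) \<gamma> x) / fact (M-n))
    - real (M-n) * ((real n * \<alpha> x^(n-1) * deriv \<alpha> x * (deriv^^n) \<beta> x + \<alpha> x^n * (deriv^^(Suc n)) \<beta> x) / fact n) *
      (\<alpha> x^(M-n) * (deriv^^(M-n)) \<gamma> x / fact (M-n)))"
    unfolding sum_distrib_left by (rule sum.cong) (simp_all only: ev atMost_iff)
  also have "\<dots> = 0"
    using core[where M=M and a="\<alpha> x" and B="\<lambda>n. (deriv^^n) \<beta> x" and a'="deriv \<alpha> x" and G="\<lambda>n. (deriv^^n) \<gamma> x"] by simp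
  finally have evs: "(\<Sum>n\<le>M. ?h (2*n)) = 0" .
  have sp: "(\<Sum>i\<le>m. ?h i) = (\<Sum>n\<le>M. ?h (2*n)) + (\<Sum>n<M. ?h (2*n+1))"
    unfolding m by (rule split_even_odd)
  show ?thesis unfolding sp evs odd0 by simp
qed

theorem mainTheorem7:
  fixes \<alpha> \<beta> \<gamma> :: "real \<Rightarrow> real" and N :: nat
  assumes "smooth_real \<alpha>" and "smooth_real \<beta>" and "smooth_real \<gamma>" and "1 \<le> N"
  shows "\<forall>m u. series_frechet N (Qser \<alpha> \<beta>) (Qser \<alpha> \<gamma>) m u
                 - series_frechet N (Qser \<alpha> \<gamma>) (Qser \<alpha> \<beta>) m u = 0"
proof (intro allI)
  fix m u
  have db: "\<And>x. cf \<alpha> \<beta> k differentiable at x" for k using cf_diff[OF assms(1,2)] .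
  have dg: "\<And>x. cf \<alpha> \<gamma> k differentiable at x" for k using cf_diff[OF assms(1,3)] .
  have rev: "(\<Sum>i\<le>m. frechet N (Qser \<alpha> \<gamma> i) (Qser \<alpha> \<beta> (m-i)) u)
      = (\<Sum>i\<le>m. frechet N (Qser \<alpha> \<gamma> (m-i)) (Qser \<alpha> \<beta> i) u)"
  proof -
    have "(\<Sum>i\<le>m. frechet N (Qser \<alpha> \<gamma> (m-i)) (Qser \<alpha> \<beta> i) u)
       = (\<Sum>i\<le>m. frechet N (Qser \<alpha> \<gamma> (m-i)) (Qser \<alpha> \<beta> (m - (m - i))) u)"
      by (rule sum.cong) auto
    also have "\<dots> = (\<Sum>i\<le>m. frechet N (Qser \<alpha> \<gamma> i) (Qser \<alpha> \<beta> (m-i)) u)"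
      using sum.nat_diff_reindex[where g="\<lambda>i. frechet N (Qser \<alpha> \<gamma> i) (Qser \<alpha> \<beta> (m-i)) u" and n="Suc m"]
      by (simp add: lessThan_Suc_atMost)
    finally show ?thesis by simp
  qed
  have pt: "frechet N (Qser \<alpha> \<beta> i) (Qser \<alpha> \<gamma> (m-i)) u - frechet N (Qser \<alpha> \<gamma> (m-i)) (Qser \<alpha> \<beta> i) u
     = u 1 ^ (m + 2) * (real i * cf \<alpha> \<beta> i (u 0) * deriv (cf \<alpha> \<gamma> (m-i)) (u 0)
            - real (m-i) * deriv (cf \<alpha> \<beta> i) (u 0) * cf \<alpha> \<gamma> (m-i) (u 0))" if "i \<le> m" for i
  proof -
    have e: "i + (m - i) + 2 = m + 2" using that by simp
    show ?thesis
      unfolding Qser_eq frechet_eq[OF assms(4) db dg] frechet_eq[OF assms(4) dg db] Suc_eq_plus1[symmetric]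
      using pair_alg[where c'="deriv (cf \<alpha> \<beta> i) (u 0)" and p="u 1" and i=i and d="cf \<alpha> \<gamma> (m-i) (u 0)"
          and j="m-i" and c="cf \<alpha> \<beta> i (u 0)" and d'="deriv (cf \<alpha> \<gamma> (m-i)) (u 0)" and q="u 2"]
      unfolding e by simp
  qed
  have "series_frechet N (Qser \<alpha> \<beta>) (Qser \<alpha> \<gamma>) m u - series_frechet N (Qser \<alpha> \<gamma>) (Qser \<alpha> \<beta>) m u
     = (\<Sum>i\<le>m. frechet N (Qser \<alpha> \<beta> i) (Qser \<alpha> \<gamma> (m-i)) u - frechet N (Qser \<alpha> \<gamma> (m-i)) (Qser \<alpha> \<beta> i) u)"
    unfolding series_frechet_def rev by (simp add: sum_subtractf)
  also have "\<dots> = (\<Sum>i\<le>m. u 1 ^ (m + 2) * (real i * cf \<alpha> \<beta> i (u 0) * deriv (cf \<alpha> \<gamma> (m-i)) (u 0)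
            - real (m-i) * deriv (cf \<alpha> \<beta> i) (u 0) * cf \<alpha> \<gamma> (m-i) (u 0)))"
    by (rule sum.cong) (simp_all add: pt)
  also have "\<dots> = u 1 ^ (m + 2) * (\<Sum>i\<le>m. real i * cf \<alpha> \<beta> i (u 0) * deriv (cf \<alpha> \<gamma> (m-i)) (u 0)
            - real (m-i) * deriv (cf \<alpha> \<beta> i) (u 0) * cf \<alpha> \<gamma> (m-i) (u 0))"
    by (simp add: sum_distrib_left)
  also have "\<dots> = 0" using cf_core[OF assms(1,2,3)] by simp
  finally show "series_frechet N (Qser \<alpha> \<beta>) (Qser \<alpha> \<gamma>) m u - series_frechet N (Qser \<alpha> \<gamma>) (Qser \<alpha> \<beta>) m u = 0" .
qed

end
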